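(* Fix an infinite-to-one map $f$ of $\mathbb{Z}$ onto $\mathbb{Z}$ and consider the blue backward Markov chain on columns described in the context. Let $n\ge1$ and let $(a(i,j))_{-n\le i,j\le n}$ be a fixed array of $0$s and $1$s. Then for every $\epsilon>0$ there exists $m$ such that for all integers $M>m$, $N>m$ and all doubly infinite $0$-$1$ sequences $(A(i))_{i\in\mathbb{Z}}$, $(B(i))_{i\in\mathbb{Z}}$, $$\Big|P\big(X(i,j)=a(i,j),\,-n\le i,j\le n \,\big|\, X(i,M)=A(i)\ \forall i\big)-P\big(X(i,j)=a(i,j),\,-n\le i,j\le n \,\big|\, X(i,N)=B(i)\ \forall i\big)\Big|<\epsilon .$$
   Context: Random variables $X(i,j)\in\{0,1\}$, $i,j\in\mathbb{Z}$; for each $j$, the $j$-th column is $(X(i,j))_{i\in\mathbb{Z}}$. Blue transition rule (the chain runs backwards in $j$): given the column $j+1$, the variables $X(i,j)$, $i\in\mathbb{Z}$, are conditionally independent (and independent of the columns $j+2,j+3,\dots$), and $X(i,j)$ equals $X(f(i),j+1)$ with probability $2/3$ and equals $1-X(f(i),j+1)$ with probability $1/3$. The conditional probability given column $M$ (resp. $N$) means: fix that column and generate columns $M-1,M-2,\dots$ (resp. $N-1,N-2,\dots$) successively by the blue transition rule. *)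

theory Defs
  imports "HOL-Probability.Probability"
begin

text \<open>0-1 values are modelled as booleans (True = 1, False = 0).
  The blue backward chain started from column M with values A is realised by
  independent flip variables E(i,j) (True = flip, probability 1/3):
  X(i,j) = X(f i, j+1) xor E(i,j) for j < M, and X(i,M) = A i.
  blueX f A M E k i is the value X(i, M - k).\<close>

fun blueX :: "(int \<Rightarrow> int) \<Rightarrow> (int \<Rightarrow> bool) \<Rightarrow> int \<Rightarrow> (int \<times> int \<Rightarrow> bool) \<Rightarrow> nat \<Rightarrow> int \<Rightarrow> bool" where
  "blueX f A M E 0 i = A i"
| "blueX f A M E (Suc k) i = (blueX f A M E k (f i) \<noteq> E (i, M - int (Suc k)))"

definition noise :: "(int \<times> int \<Rightarrow> bool) measure" where
  "noise = PiM UNIV (\<lambda>_. measure_pmf (bernoulli_pmf (1/3)))"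

definition blue_prob :: "(int \<Rightarrow> int) \<Rightarrow> int \<Rightarrow> (int \<Rightarrow> int \<Rightarrow> bool) \<Rightarrow> int \<Rightarrow> (int \<Rightarrow> bool) \<Rightarrow> real" where
  "blue_prob f n a M A = measure noise
     {E \<in> space noise. \<forall>i\<in>{-n..n}. \<forall>j\<in>{-n..n}. blueX f A M E (nat (M - j)) i = a i j}"

definition infinite_to_one_onto :: "(int \<Rightarrow> int) \<Rightarrow> bool" where
  "infinite_to_one_onto f \<longleftrightarrow> surj f \<and> (\<forall>y. infinite (f -` {y}))"

end

theory Submission imports Defs begin

lemma L1:
  fixes D :: "(int \<times> int) set" and P :: "(int \<times> int \<Rightarrow> bool) \<Rightarrow> bool"
  assumes finD: "finite D" and dep: "\<And>E. P E = P (\<lambda>x. if x \<in> D then E x else False)"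
  shows "measure noise {E \<in> space noise. P E} =
         measure_pmf.prob (Pi_pmf D False (\<lambda>_. bernoulli_pmf (1/3))) {E. P E}"
proof -
  let ?Ms = "\<lambda>_::int\<times>int. measure_pmf (bernoulli_pmf (1/3))"
  let ?Q = "Pi_pmf D False (\<lambda>_. bernoulli_pmf (1/3))"
  interpret PP: product_prob_space ?Ms "UNIV :: (int \<times> int) set"
    by (rule product_prob_spaceI) (simp add: measure_pmf.prob_space_axioms)
  define X where "X = {g \<in> PiE D (\<lambda>_. UNIV). P (\<lambda>x. if x \<in> D then g x else False)}"
  have spn: "space noise = UNIV"
    by (simp add: noise_def space_PiM)
  have dep': "P (\<lambda>x. if x \<in> D then restrict E D x else False) = P E" for E
  proof -
    have "(\<lambda>x. if x \<in> D then restrict E D x else False) = (\<lambda>x. if x \<in> D then E x else False)"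
      by auto
    thus ?thesis using dep[of E] by simp
  qed
  have S: "{E \<in> space noise. P E} = prod_emb UNIV ?Ms D X"
    unfolding prod_emb_def X_def using dep' by (auto simp: spn space_PiM)
  have finX: "finite X" unfolding X_def
    by (rule finite_subset[of _ "PiE D (\<lambda>_. UNIV::bool set)"]) (auto intro!: finite_PiE finD)
  have Xs: "X \<in> sets (PiM D ?Ms)"
  proof -
    have "X = (\<Union>g\<in>X. PiE D (\<lambda>i. {g i}))"
    proof (intro equalityI subsetI)
      fix x assume "x \<in> X" moreover have "x \<in> PiE D (\<lambda>i. {x i})"
        using \<open>x \<in> X\<close> by (simp add: X_def PiE_def)
      ultimately show "x \<in> (\<Union>g\<in>X. PiE D (\<lambda>i. {g i}))"
        by blast
    next
      fix x assume "x \<in> (\<Union>g\<in>X. PiE D (\<lambda>i. {g i}))"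
      then obtain g where g: "g \<in> X" "x \<in> PiE D (\<lambda>i. {g i})" by auto
      have "x = g"
      proof
        fix i show "x i = g i"
          proof (cases "i \<in> D")
          case True thus ?thesis using g by (auto simp: PiE_iff)
        next
          case False
          have "g \<in> PiE D (\<lambda>_. UNIV)" using g(1) unfolding X_def by blast
          hence "g \<in> extensional D" by (simp only: PiE_iff)
          moreover have "x \<in> extensional D" using g(2) by (simp only: PiE_iff)
          ultimately show ?thesis using False by (metis extensional_arb)
        qed
      qed
      thus "x \<in> X" using g by simp
    qed
    also have "\<dots> \<in> sets (PiM D ?Ms)"
      using finX by (intro sets.finite_UN sets_PiM_I_finite finD) auto
    finally show ?thesis .
  qed
  have distr_eq: "distr (measure_pmf ?Q) (PiM D ?Ms) (\<lambda>x. restrict x D) = PiM D ?Ms"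
  proof (rule PP.PiM_eqI)
    show "finite D" by fact
    show "sets (distr (measure_pmf ?Q) (PiM D ?Ms) (\<lambda>x. restrict x D)) = sets (PiM D ?Ms)" by simp
  next
    fix A assume A: "\<And>i. i \<in> D \<Longrightarrow> A i \<in> sets (?Ms i)"
    have "Pi\<^sub>E D A \<in> sets (PiM D ?Ms)"
      using A by (intro sets_PiM_I_finite finD) auto
    hence "emeasure (distr (measure_pmf ?Q) (PiM D ?Ms) (\<lambda>x. restrict x D)) (Pi\<^sub>E D A) =
           emeasure (measure_pmf ?Q) ((\<lambda>x. restrict x D) -` Pi\<^sub>E D A)"
      by (subst emeasure_distr) (auto simp: space_PiM)
    also have "\<dots> = emeasure (measure_pmf ?Q) (PiE_dflt D False A)"
      by (intro emeasure_eq_AE AE_pmfI) (auto simp: PiE_dflt_def set_Pi_pmf finD)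
    also have "\<dots> = (\<Prod>i\<in>D. emeasure (?Ms i) (A i))"
      by (simp add: measure_pmf.emeasure_eq_measure measure_Pi_pmf_PiE_dflt finD prod_ennreal)
    finally show "emeasure (distr (measure_pmf ?Q) (PiM D ?Ms) (\<lambda>x. restrict x D)) (Pi\<^sub>E D A) =
           (\<Prod>i\<in>D. emeasure (?Ms i) (A i))" .
  qed
  have "emeasure noise {E \<in> space noise. P E} = emeasure noise (prod_emb UNIV ?Ms D X)"
    by (simp only: S)
  also have "\<dots> = emeasure (PiM D ?Ms) X"
    unfolding noise_def by (rule PP.emeasure_PiM_emb'[OF _ finD Xs]) simp
  also have "\<dots> = emeasure (distr (measure_pmf ?Q) (PiM D ?Ms) (\<lambda>x. restrict x D)) X"
    by (simp add: distr_eq)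
  also have "\<dots> = emeasure (measure_pmf ?Q) ((\<lambda>x. restrict x D) -` X)"
    using Xs by (subst emeasure_distr) (auto simp: space_PiM)
  also have "(\<lambda>x. restrict x D) -` X = {E. P E}"
    unfolding X_def using dep' by auto
  finally have "emeasure noise {E \<in> space noise. P E} = emeasure (measure_pmf ?Q) {E. P E}" .
  thus ?thesis by (simp add: measure_def)
qed

definition ev :: "(int \<Rightarrow> int) \<Rightarrow> int \<Rightarrow> (int \<Rightarrow> int \<Rightarrow> bool) \<Rightarrow> int \<Rightarrow> (int \<Rightarrow> bool) \<Rightarrow> (int \<times> int \<Rightarrow> bool) \<Rightarrow> bool" where
  "ev f n a M A E \<longleftrightarrow> (\<forall>i\<in>{-n..n}. \<forall>j\<in>{-n..n}. blueX f A M E (nat (M - j)) i = a i j)"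

definition nodes :: "(int \<Rightarrow> int) \<Rightarrow> int \<Rightarrow> int \<Rightarrow> (int \<times> int) set" where
  "nodes f n M = (\<lambda>(i,j,t). ((f^^t) i, j + int t)) ` {(i,j,t). i \<in> {-n..n} \<and> j \<in> {-n..n} \<and> t < nat (M - j)}"

definition pts :: "(int \<Rightarrow> int) \<Rightarrow> int \<Rightarrow> int \<Rightarrow> int set" where
  "pts f n M = (\<lambda>(i,j). (f^^nat (M - j)) i) ` ({-n..n} \<times> {-n..n})"

lemma blueX_E:
  "(\<And>t. t < k \<Longrightarrow> E ((f^^t) i, M - int k + int t) = E' ((f^^t) i, M - int k + int t))
   \<Longrightarrow> blueX f A M E k i = blueX f A M E' k i"
proof (induction k arbitrary: i)
  case 0 show ?case by simp
next
  case (Suc k)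
  have "blueX f A M E k (f i) = blueX f A M E' k (f i)"
  proof (rule Suc.IH)
    fix t assume "t < k"
    hence "E ((f^^Suc t) i, M - int (Suc k) + int (Suc t)) = E' ((f^^Suc t) i, M - int (Suc k) + int (Suc t))"
      using Suc.prems[of "Suc t"] by simp
    moreover have "(f^^Suc t) i = (f^^t) (f i)" by (simp add: funpow_swap1)
    moreover have "M - int (Suc k) + int (Suc t) = M - int k + int t" by simp
    ultimately show "E ((f^^t) (f i), M - int k + int t) = E' ((f^^t) (f i), M - int k + int t)"
      by (simp only:)
  qed
  moreover have "E (i, M - int (Suc k)) = E' (i, M - int (Suc k))"
    using Suc.prems[of 0] by simp
  ultimately show ?case by simp
qed

lemma blueX_A:
  "A ((f^^k) i) = A' ((f^^k) i) \<Longrightarrow> blueX f A M E k i = blueX f A' M E k i"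
proof (induction k arbitrary: i)
  case 0 thus ?case by simp
next
  case (Suc k)
  have "(f^^Suc k) i = (f^^k) (f i)" by (simp add: funpow_swap1)
  hence "blueX f A M E k (f i) = blueX f A' M E k (f i)" using Suc by (intro Suc.IH) simp
  thus ?case by simp
qed

lemma blueX_shift:
  "blueX f A (M+1) E (Suc k) i = blueX f (\<lambda>x. A (f x) \<noteq> E (x, M)) M E k i"
proof (induction k arbitrary: i)
  case 0 thus ?case by simp
next
  case (Suc k)
  have e1: "M + 1 - int (Suc (Suc k)) = M - int (Suc k)" by simp
  have e2: "M - (1 + int k) = M - int k - 1" by simp
  show ?case using Suc.IH[of "f i"] by (simp add: e2)
qed

lemma ev_dep_gen:
  assumes "\<And>x. x \<in> nodes f n M \<Longrightarrow> E x = E' x"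
  shows "ev f n a M A E = ev f n a M A E'"
proof -
  have "blueX f A M E (nat (M - j)) i = blueX f A M E' (nat (M - j)) i"
    if i: "i \<in> {-n..n}" and j: "j \<in> {-n..n}" for i j
  proof (rule blueX_E)
    fix t assume t: "t < nat (M - j)"
    hence eq: "M - int (nat (M - j)) + int t = j + int t" by simp
    have "((f^^t) i, j + int t) \<in> nodes f n M"
      unfolding nodes_def using i j t by (intro image_eqI[of _ _ "(i,j,t)"]) auto
    thus "E ((f^^t) i, M - int (nat (M - j)) + int t) = E' ((f^^t) i, M - int (nat (M - j)) + int t)"
      unfolding eq using assms by blast
  qed
  thus ?thesis unfolding ev_def by simp
qed

lemma ev_depA:
  assumes "\<And>x. x \<in> pts f n M \<Longrightarrow> A x = A' x"
  shows "ev f n a M A E = ev f n a M A' E"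
proof -
  have "blueX f A M E (nat (M - j)) i = blueX f A' M E (nat (M - j)) i"
    if i: "i \<in> {-n..n}" and j: "j \<in> {-n..n}" for i j
  proof (rule blueX_A)
    have "(f^^nat (M - j)) i \<in> pts f n M"
      unfolding pts_def using i j by (intro image_eqI[of _ _ "(i,j)"]) auto
    thus "A ((f^^nat (M - j)) i) = A' ((f^^nat (M - j)) i)" using assms by blast
  qed
  thus ?thesis unfolding ev_def by simp
qed

lemma finite_nodes: "finite (nodes f n M)"
proof -
  have "{(i,j,t). i \<in> {-n..n} \<and> j \<in> {-n..n} \<and> t < nat (M - j)} \<subseteq> {-n..n} \<times> {-n..n} \<times> {..<nat (M + n)}"
    by auto
  hence "finite {(i,j,t). i \<in> {-n..n} \<and> j \<in> {-n..n} \<and> t < nat (M - j)}"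
    by (rule finite_subset) auto
  thus ?thesis unfolding nodes_def by simp
qed

lemma finite_pts: "finite (pts f n M)"
  unfolding pts_def by simp

lemma card_pts: "card (pts f n M) \<le> nat (2*n+1) ^ 2"
proof -
  have "card (pts f n M) \<le> card ({-n..n} \<times> {-n..n})"
    unfolding pts_def by (rule card_image_le) simp
  also have "\<dots> = nat (2*n+1) ^ 2" by (simp add: card_cartesian_product power2_eq_square)
  finally show ?thesis .
qed

lemma blue_prob_ev: "blue_prob f n a M A = measure noise {E \<in> space noise. ev f n a M A E}"
  by (simp add: blue_prob_def ev_def)

lemma blue_prob_pmf:
  "blue_prob f n a M A = measure_pmf.prob (Pi_pmf (nodes f n M) False (\<lambda>_. bernoulli_pmf (1/3))) {E. ev f n a M A E}"
  unfolding blue_prob_ev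
  by (rule L1[OF finite_nodes]) (rule ev_dep_gen, simp)

lemma blue_prob_bounds: "0 \<le> blue_prob f n a M A" "blue_prob f n a M A \<le> 1"
  unfolding blue_prob_pmf by (simp_all add: measure_pmf.prob_le_1)


lemma int_bdd:
  fixes h :: "'a \<Rightarrow> real"
  assumes "\<And>x. \<bar>h x\<bar> \<le> B"
  shows "integrable (measure_pmf P) h"
  by (rule measure_pmf.integrable_const_bound[where B=B]) (use assms in auto)

lemma prob_pair_pmf:
  "measure_pmf.prob (pair_pmf P Q) {z. R (fst z) (snd z)} =
   measure_pmf.expectation P (\<lambda>g. measure_pmf.prob Q {e. R g e})"
proof -
  have "emeasure (pair_pmf P Q) {z. R (fst z) (snd z)} =
        (\<integral>\<^sup>+z. indicator {z. R (fst z) (snd z)} z \<partial>pair_pmf P Q)"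
    by (rule nn_integral_indicator[symmetric]) simp
  also have "\<dots> = (\<integral>\<^sup>+g. \<integral>\<^sup>+e. indicator {z. R (fst z) (snd z)} (g, e) \<partial>Q \<partial>P)"
    by (rule nn_integral_pair_pmf')
  also have "\<dots> = (\<integral>\<^sup>+g. ennreal (measure_pmf.prob Q {e. R g e}) \<partial>P)"
  proof (intro nn_integral_cong)
    fix g
    have "(\<integral>\<^sup>+e. indicator {z. R (fst z) (snd z)} (g, e) \<partial>Q) = (\<integral>\<^sup>+e. indicator {e. R g e} e \<partial>Q)"
      by (intro nn_integral_cong) (simp add: indicator_def)
    also have "\<dots> = emeasure Q {e. R g e}"
      by (rule nn_integral_indicator) simp
    finally show "(\<integral>\<^sup>+e. indicator {z. R (fst z) (snd z)} (g, e) \<partial>Q) = ennreal (measure_pmf.prob Q {e. R g e})"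
      by (simp add: measure_pmf.emeasure_eq_measure)
  qed
  also have "\<dots> = ennreal (measure_pmf.expectation P (\<lambda>g. measure_pmf.prob Q {e. R g e}))"
    by (rule nn_integral_eq_integral) (auto intro!: int_bdd[where B=1])
  finally have "ennreal (measure_pmf.prob (pair_pmf P Q) {z. R (fst z) (snd z)}) =
     ennreal (measure_pmf.expectation P (\<lambda>g. measure_pmf.prob Q {e. R g e}))"
    by (simp add: measure_pmf.emeasure_eq_measure)
  moreover have "0 \<le> measure_pmf.expectation P (\<lambda>g. measure_pmf.prob Q {e. R g e})"
    by (rule Bochner_Integration.integral_nonneg) simp
  ultimately show ?thesis by simp
qed

lemma markov:
  assumes "n \<le> M"
  shows "blue_prob f n a (M+1) A =
    measure_pmf.expectation (Pi_pmf ((\<lambda>x. (x,M)) ` pts f n M) False (\<lambda>_. bernoulli_pmf (1/3)))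
      (\<lambda>g. blue_prob f n a M (\<lambda>x. A (f x) \<noteq> g (x, M)))"
proof -
  define C where "C = (\<lambda>x. (x,M)) ` pts f n M"
  define D where "D = nodes f n M"
  let ?p = "\<lambda>_::int\<times>int. bernoulli_pmf (1/3)"
  have finC: "finite C" unfolding C_def using finite_pts by simp
  have finD: "finite D" unfolding D_def by (rule finite_nodes)
  have disj: "C \<inter> D = {}"
  proof -
    { fix x assume "x \<in> D" hence "snd x < M" unfolding D_def nodes_def by auto }
    moreover { fix x assume "x \<in> C" hence "snd x = M" unfolding C_def by auto }
    ultimately show ?thesis by fastforce
  qed
  have key: "ev f n a (M+1) A' E = ev f n a M (\<lambda>x. A' (f x) \<noteq> E (x, M)) E" for A' E
  proof -
    have "blueX f A' (M+1) E (nat (M + 1 - j)) i = blueX f (\<lambda>x. A' (f x) \<noteq> E (x, M)) M E (nat (M - j)) i"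
      if "j \<in> {-n..n}" for i j
    proof -
      have "nat (M + 1 - j) = Suc (nat (M - j))" using that assms by auto
      thus ?thesis by (simp only: blueX_shift)
    qed
    thus ?thesis unfolding ev_def by simp
  qed
  define mrg :: "(int\<times>int \<Rightarrow> bool) \<times> (int\<times>int \<Rightarrow> bool) \<Rightarrow> (int\<times>int \<Rightarrow> bool)"
    where "mrg = (\<lambda>(g,e) x. if x \<in> C then g x else e x)"
  have dep: "ev f n a (M+1) A E = ev f n a (M+1) A (\<lambda>x. if x \<in> C \<union> D then E x else False)" for E
  proof -
    let ?E' = "\<lambda>x. if x \<in> C \<union> D then E x else False"
    have "ev f n a M (\<lambda>x. A (f x) \<noteq> E (x, M)) E = ev f n a M (\<lambda>x. A (f x) \<noteq> ?E' (x, M)) E"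
      by (rule ev_depA) (auto simp: C_def)
    also have "\<dots> = ev f n a M (\<lambda>x. A (f x) \<noteq> ?E' (x, M)) ?E'"
      by (rule ev_dep_gen) (auto simp: D_def)
    finally show ?thesis by (simp only: key)
  qed
  have "blue_prob f n a (M+1) A = measure_pmf.prob (Pi_pmf (C \<union> D) False ?p) {E. ev f n a (M+1) A E}"
    unfolding blue_prob_ev
  proof (rule L1)
    show "finite (C \<union> D)" using finC finD by simp
    show "ev f n a (M+1) A E = ev f n a (M+1) A (\<lambda>x. if x \<in> C \<union> D then E x else False)" for E
      by (rule dep)
  qed
  also have "Pi_pmf (C \<union> D) False ?p = map_pmf mrg (pair_pmf (Pi_pmf C False ?p) (Pi_pmf D False ?p))"
    unfolding mrg_def by (rule Pi_pmf_union[OF finC finD disj])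
  finally have 1: "blue_prob f n a (M+1) A =
    measure_pmf.prob (pair_pmf (Pi_pmf C False ?p) (Pi_pmf D False ?p)) (mrg -` {E. ev f n a (M+1) A E})"
    by simp
  have 2: "ev f n a (M+1) A (mrg (g,e)) = ev f n a M (\<lambda>x. A (f x) \<noteq> g (x,M)) e" for g e
  proof -
    have "ev f n a (M+1) A (mrg (g,e)) = ev f n a M (\<lambda>x. A (f x) \<noteq> mrg (g,e) (x,M)) (mrg (g,e))"
      by (rule key)
    also have "\<dots> = ev f n a M (\<lambda>x. A (f x) \<noteq> g (x,M)) (mrg (g,e))"
      by (rule ev_depA) (auto simp: mrg_def C_def)
    also have "\<dots> = ev f n a M (\<lambda>x. A (f x) \<noteq> g (x,M)) e"
      by (rule ev_dep_gen) (use disj in \<open>auto simp: mrg_def D_def\<close>)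
    finally show ?thesis .
  qed
  have 3: "mrg -` {E. ev f n a (M+1) A E} = {z. ev f n a M (\<lambda>x. A (f x) \<noteq> fst z (x,M)) (snd z)}"
    using 2 by auto
  have "blue_prob f n a (M+1) A = measure_pmf.expectation (Pi_pmf C False ?p)
          (\<lambda>g. measure_pmf.prob (Pi_pmf D False ?p) {e. ev f n a M (\<lambda>x. A (f x) \<noteq> g (x,M)) e})"
    unfolding 1 3 by (rule prob_pair_pmf)
  also have "\<dots> = measure_pmf.expectation (Pi_pmf C False ?p) (\<lambda>g. blue_prob f n a M (\<lambda>x. A (f x) \<noteq> g (x, M)))"
    by (simp add: blue_prob_pmf D_def)
  finally show ?thesis unfolding C_def .
qed


lemma doeblin:
  fixes C :: "'a set" and H1 H2 :: "('a \<Rightarrow> bool) \<Rightarrow> real"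
  assumes finC: "finite C" and bd: "\<And>g. \<bar>H1 g - H2 g\<bar> \<le> d"
    and eqs: "(\<Sum>g\<in>PiE_dflt C False (\<lambda>_. UNIV). H1 g) = (\<Sum>g\<in>PiE_dflt C False (\<lambda>_. UNIV). H2 g)"
  shows "\<bar>measure_pmf.expectation (Pi_pmf C False (\<lambda>_. bernoulli_pmf (1/3))) H1
          - measure_pmf.expectation (Pi_pmf C False (\<lambda>_. bernoulli_pmf (1/3))) H2\<bar>
         \<le> (1 - (2/3)^card C) * d"
proof -
  define F where "F = PiE_dflt C False (\<lambda>_. UNIV::bool set)"
  define Q where "Q = Pi_pmf C False (\<lambda>_. bernoulli_pmf (1/3))"
  define u :: real where "u = (1/3)^card C"
  have finF: "finite F" unfolding F_def using finC by auto
  have sup: "set_pmf Q \<subseteq> F" unfolding Q_def F_def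
    using set_Pi_pmf_subset[OF finC, of False "\<lambda>_. bernoulli_pmf (1/3)"] by (auto simp: PiE_dflt_def)
  have intH: "measure_pmf.expectation Q H = (\<Sum>g\<in>F. pmf Q g * H g)" for H :: "_ \<Rightarrow> real"
    using integral_measure_pmf[OF finF, of Q H] sup by auto
  have pmfQ: "pmf Q g = (\<Prod>x\<in>C. if g x then 1/3 else 2/3)" if "g \<in> F" for g
    unfolding Q_def using that finC by (subst pmf_Pi') (auto simp: F_def PiE_dflt_def intro!: prod.cong)
  have ge: "u \<le> pmf Q g" if "g \<in> F" for g
  proof -
    have "u = (\<Prod>x\<in>C. 1/3::real)" by (simp add: u_def)
    also have "\<dots> \<le> (\<Prod>x\<in>C. if g x then 1/3 else 2/3::real)" by (intro prod_mono) auto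
    finally show ?thesis using pmfQ[OF that] by simp
  qed
  have s1: "(\<Sum>g\<in>F. pmf Q g) = 1" by (rule sum_pmf_eq_1[OF finF sup])
  have cF: "card F = 2^card C" unfolding F_def using finC by (simp add: card_PiE_dflt)
  have sw: "(\<Sum>g\<in>F. pmf Q g - u) = 1 - (2/3)^card C"
  proof -
    have "(\<Sum>g\<in>F. pmf Q g - u) = 1 - 2^card C * u" using s1 cF by (simp add: sum_subtractf)
    also have "(2::real)^card C * u = (2/3)^card C" by (simp add: u_def power_mult_distrib[symmetric])
    finally show ?thesis .
  qed
  have "measure_pmf.expectation Q H1 - measure_pmf.expectation Q H2 = (\<Sum>g\<in>F. pmf Q g * (H1 g - H2 g))"
    by (simp add: intH sum_subtractf algebra_simps)
  also have "\<dots> = (\<Sum>g\<in>F. (pmf Q g - u) * (H1 g - H2 g)) + u * ((\<Sum>g\<in>F. H1 g) - (\<Sum>g\<in>F. H2 g))"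
    by (simp add: algebra_simps sum.distrib sum_subtractf sum_distrib_left)
  also have "\<dots> = (\<Sum>g\<in>F. (pmf Q g - u) * (H1 g - H2 g))" using eqs by (simp add: F_def)
  finally have eq: "measure_pmf.expectation Q H1 - measure_pmf.expectation Q H2 = (\<Sum>g\<in>F. (pmf Q g - u) * (H1 g - H2 g))" .
  have "\<bar>\<Sum>g\<in>F. (pmf Q g - u) * (H1 g - H2 g)\<bar> \<le> (\<Sum>g\<in>F. \<bar>(pmf Q g - u) * (H1 g - H2 g)\<bar>)"
    by (rule sum_abs)
  also have "\<dots> \<le> (\<Sum>g\<in>F. (pmf Q g - u) * d)"
  proof (intro sum_mono)
    fix g assume "g \<in> F"
    hence "0 \<le> pmf Q g - u" using ge by simp
    thus "\<bar>(pmf Q g - u) * (H1 g - H2 g)\<bar> \<le> (pmf Q g - u) * d"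
      using bd[of g] by (simp add: abs_mult mult_left_mono)
  qed
  also have "\<dots> = (1 - (2/3)^card C) * d" by (simp add: sum_distrib_right[symmetric] sw)
  finally show ?thesis using eq unfolding Q_def by simp
qed

lemma blue_prob_depA:
  assumes "\<And>x. x \<in> pts f n M \<Longrightarrow> B x = B' x"
  shows "blue_prob f n a M B = blue_prob f n a M B'"
  unfolding blue_prob_ev using ev_depA[OF assms] by simp

lemma symm_sum:
  "(\<Sum>g\<in>PiE_dflt ((\<lambda>x. (x,M)) ` pts f n M) False (\<lambda>_. UNIV). blue_prob f n a M (\<lambda>x. A (f x) \<noteq> g (x,M))) =
   (\<Sum>g\<in>PiE_dflt ((\<lambda>x. (x,M)) ` pts f n M) False (\<lambda>_. UNIV). blue_prob f n a M (\<lambda>x. A' (f x) \<noteq> g (x,M)))"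
proof -
  define C where "C = (\<lambda>x. (x,M)) ` pts f n M"
  define F where "F = PiE_dflt C False (\<lambda>_. UNIV::bool set)"
  define c where "c = (\<lambda>y. y \<in> C \<and> A (f (fst y)) \<noteq> A' (f (fst y)))"
  define \<phi> where "\<phi> = (\<lambda>(g::int\<times>int \<Rightarrow> bool) y. g y \<noteq> c y)"
  have inv: "\<phi> (\<phi> g) = g" for g unfolding \<phi>_def by auto
  have inF: "\<phi> g \<in> F" if "g \<in> F" for g using that unfolding \<phi>_def F_def PiE_dflt_def c_def by auto
  have eq: "blue_prob f n a M (\<lambda>x. A' (f x) \<noteq> \<phi> g (x,M)) = blue_prob f n a M (\<lambda>x. A (f x) \<noteq> g (x,M))" for g
    by (rule blue_prob_depA) (auto simp: \<phi>_def c_def C_def)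
  have "(\<Sum>g\<in>F. blue_prob f n a M (\<lambda>x. A (f x) \<noteq> g (x,M))) = (\<Sum>g\<in>F. blue_prob f n a M (\<lambda>x. A' (f x) \<noteq> g (x,M)))"
    by (rule sum.reindex_bij_witness[where i=\<phi> and j=\<phi>]) (rule inv, erule inF, rule inv, erule inF, rule eq)
  thus ?thesis unfolding F_def C_def .
qed

definition rho :: "int \<Rightarrow> real" where "rho n = 1 - (2/3)^(nat (2*n+1)^2)"

lemma rho_bounds: "0 \<le> rho n" "rho n < 1"
  unfolding rho_def by (auto simp: power_le_one)

lemma step_osc:
  assumes "n \<le> M" and hyp: "\<And>B B'. \<bar>blue_prob f n a M B - blue_prob f n a M B'\<bar> \<le> d"
  shows "\<bar>blue_prob f n a (M+1) A - blue_prob f n a (M+1) A'\<bar> \<le> rho n * d"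
proof -
  define C where "C = (\<lambda>x. (x,M)) ` pts f n M"
  have finC: "finite C" unfolding C_def using finite_pts by simp
  have d0: "0 \<le> d" using hyp[of A A] by simp
  have "\<bar>blue_prob f n a (M+1) A - blue_prob f n a (M+1) A'\<bar> \<le> (1 - (2/3)^card C) * d"
    unfolding markov[OF assms(1)] C_def[symmetric]
    by (rule doeblin[OF finC hyp]) (unfold C_def, rule symm_sum)
  also have "\<dots> \<le> rho n * d"
  proof (rule mult_right_mono[OF _ d0])
    have "card C \<le> card (pts f n M)" unfolding C_def by (rule card_image_le[OF finite_pts])
    also have "\<dots> \<le> nat (2*n+1)^2" by (rule card_pts)
    finally have "(2/3::real)^(nat (2*n+1)^2) \<le> (2/3)^card C"
      by (rule power_decreasing) auto
    thus "1 - (2/3)^card C \<le> rho n" unfolding rho_def by simp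
  qed
  finally show ?thesis .
qed

lemma step_near:
  assumes "n \<le> N" and hyp: "\<And>B. \<bar>blue_prob f n a N B - c\<bar> \<le> d"
  shows "\<bar>blue_prob f n a (N+1) A - c\<bar> \<le> d"
proof -
  define Q where "Q = Pi_pmf ((\<lambda>x. (x,N)) ` pts f n N) False (\<lambda>_. bernoulli_pmf (1/3))"
  define H where "H = (\<lambda>g. blue_prob f n a N (\<lambda>x. A (f x) \<noteq> g (x, N)))"
  have intH: "integrable (measure_pmf Q) H"
    by (rule int_bdd[where B=1]) (simp add: H_def blue_prob_bounds abs_le_iff)
  have e: "blue_prob f n a (N+1) A - c = measure_pmf.expectation Q (\<lambda>g. H g - c)"
    unfolding markov[OF assms(1)] Q_def[symmetric] H_def[symmetric]
    by (subst Bochner_Integration.integral_diff) (auto simp: intH)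
  have b: "\<bar>H g - c\<bar> \<le> d" for g unfolding H_def by (rule hyp)
  have "measure_pmf.expectation Q (\<lambda>g. H g - c) \<le> measure_pmf.expectation Q (\<lambda>_. d)"
    by (rule integral_mono) (use intH b in \<open>auto simp: abs_le_iff\<close>)
  moreover have "measure_pmf.expectation Q (\<lambda>_. - d) \<le> measure_pmf.expectation Q (\<lambda>g. H g - c)"
  proof (rule integral_mono)
    fix g show "- d \<le> H g - c" using b[of g] by (simp add: abs_le_iff)
  qed (use intH in auto)
  ultimately show ?thesis unfolding e by (simp add: abs_le_iff)
qed

lemma osc:
  "\<bar>blue_prob f n a (n + int k) B - blue_prob f n a (n + int k) B'\<bar> \<le> rho n ^ k"
proof (induction k arbitrary: B B')
  case 0
  show ?case using blue_prob_bounds[of f n a n B] blue_prob_bounds[of f n a n B'] by simp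
next
  case (Suc k)
  have "\<bar>blue_prob f n a (n + int k + 1) B - blue_prob f n a (n + int k + 1) B'\<bar> \<le> rho n * rho n ^ k"
    by (rule step_osc) (auto intro: Suc.IH)
  moreover have "n + int (Suc k) = n + int k + 1" by simp
  ultimately show ?case by (simp only: power_Suc)
qed

lemma near:
  "\<bar>blue_prob f n a (n + int k + int l) A - blue_prob f n a (n + int k) B\<bar> \<le> rho n ^ k"
proof (induction l arbitrary: A)
  case 0
  show ?case using osc by simp
next
  case (Suc l)
  have "\<bar>blue_prob f n a (n + int k + int l + 1) A - blue_prob f n a (n + int k) B\<bar> \<le> rho n ^ k"
    by (rule step_near) (auto intro: Suc.IH)
  moreover have "n + int k + int (Suc l) = n + int k + int l + 1" by simp
  ultimately show ?case by (simp only:)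
qed

theorem mainTheorem11:
  fixes f :: "int \<Rightarrow> int" and n :: int and a :: "int \<Rightarrow> int \<Rightarrow> bool"
  assumes "infinite_to_one_onto f" and "n \<ge> 1"
  shows "\<forall>\<epsilon>::real. \<epsilon> > 0 \<longrightarrow> (\<exists>m::int. \<forall>M N. M > m \<longrightarrow> N > m \<longrightarrow>
           (\<forall>A B :: int \<Rightarrow> bool. \<bar>blue_prob f n a M A - blue_prob f n a N B\<bar> < \<epsilon>))"
proof (intro allI impI)
  fix \<epsilon> :: real assume "\<epsilon> > 0"
  then obtain k where k: "rho n ^ k < \<epsilon>" using real_arch_pow_inv rho_bounds(2) by blast
  have key: "\<bar>blue_prob f n a N B - blue_prob f n a M A\<bar> < \<epsilon>"
    if "n + int k < M" "M \<le> N" for M N A B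
  proof -
    define k1 where "k1 = nat (M - n)"
    define l where "l = nat (N - M)"
    have M: "M = n + int k1" and N: "N = n + int k1 + int l" using that by (auto simp: k1_def l_def)
    have "\<bar>blue_prob f n a N B - blue_prob f n a M A\<bar> \<le> rho n ^ k1"
      unfolding M N by (rule near)
    also have "\<dots> \<le> rho n ^ k"
      using that rho_bounds[of n] by (intro power_decreasing) (auto simp: k1_def)
    finally show ?thesis using k by simp
  qed
  show "\<exists>m::int. \<forall>M N. M > m \<longrightarrow> N > m \<longrightarrow>
           (\<forall>A B :: int \<Rightarrow> bool. \<bar>blue_prob f n a M A - blue_prob f n a N B\<bar> < \<epsilon>)"
  proof (intro exI[of _ "n + int k"] allI impI)
    fix M N A B assume "n + int k < M" "n + int k < N"
    show "\<bar>blue_prob f n a M A - blue_prob f n a N B\<bar> < \<epsilon>"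
    proof (cases "M \<le> N")
      case True thus ?thesis using key[of M N B A] \<open>n + int k < M\<close> by (simp add: abs_minus_commute)
    next
      case False thus ?thesis using key[of N M A B] \<open>n + int k < N\<close> by simp
    qed
  qed
qed

end
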